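(* There does not exist $A\in\mathbb{Z}^{24}$ such that, for every positive integer $m$, the orbit of $S=\mathrm{IAP}(\pi_m(A),\pi_m(A)X_{24})$ is $(24m,24m)$-periodic in $\mathbb{Z}/m\mathbb{Z}$ and the triangles $\nabla S[24\lambda m]$ are balanced in $\mathbb{Z}/m\mathbb{Z}$ for all non-negative integers $\lambda$.
   Context: $\pi_m$ is reduction mod $m$; tuples are row vectors; $X_{24}=(\delta_{r,s}+\delta_{r,25-s})_{1\le r,s\le24}$. For $24$-tuples $A=(a_0,\dots,a_{23})$, $D=(d_0,\dots,d_{23})$, $\mathrm{IAP}(A,D)=(u_j)_{j\in\mathbb{Z}}$ with $u_{24q+r}=a_r+qd_r$. $S[n]=(u_0,\dots,u_{n-1})$. The orbit of $(u_j)$ is $(a_{i,j})_{(i,j)\in\mathbb{N}\times\mathbb{Z}}$ with $a_{0,j}=u_j$, $a_{i,j}=-a_{i-1,j}-a_{i-1,j+1}$; it is $(p,q)$-periodic if $a_{i+q,j}=a_{i,j+p}=a_{i,j}$ for all $(i,j)$. For a finite sequence, $\nabla(u_0,\dots,u_{n-1})=(a_{i,j})_{i+j<n}$ defined by the same rule; it is balanced if every element of $\mathbb{Z}/m\mathbb{Z}$ occurs equally often among its entries. *)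

theory Defs
  imports Main
begin

text \<open>Elements of Z/mZ are represented by their canonical representatives in {0..<m}
  (as integers); reduction mod m is \<open>x mod int m\<close>. Tuples in Z^24 are integer lists of
  length 24, indexed 0..23.\<close>

definition X24 :: "nat \<Rightarrow> nat \<Rightarrow> int" where
  "X24 r s = (if r = s then 1 else 0) + (if r = 25 - s then 1 else 0)"

definition pi_m :: "nat \<Rightarrow> int list \<Rightarrow> int list" where
  "pi_m m A = map (\<lambda>x. x mod int m) A"

text \<open>row vector (24-tuple) times X24, computed in Z/mZ; entry s (0-indexed) corresponds to
  column s+1 of the 1-indexed matrix.\<close>
definition times_X24 :: "nat \<Rightarrow> int list \<Rightarrow> int list" where
  "times_X24 m A = map (\<lambda>s. (\<Sum>r = 1..24. A ! (r - 1) * X24 r (s + 1)) mod int m) [0..<24]"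

definition IAP :: "nat \<Rightarrow> int list \<Rightarrow> int list \<Rightarrow> int \<Rightarrow> int" where
  "IAP m A D j = (A ! nat (j mod 24) + (j div 24) * D ! nat (j mod 24)) mod int m"

fun orbit :: "nat \<Rightarrow> (int \<Rightarrow> int) \<Rightarrow> nat \<Rightarrow> int \<Rightarrow> int" where
  "orbit m u 0 j = u j mod int m"
| "orbit m u (Suc i) j = (- orbit m u i j - orbit m u i (j + 1)) mod int m"

definition periodic_orbit :: "nat \<Rightarrow> (int \<Rightarrow> int) \<Rightarrow> nat \<Rightarrow> nat \<Rightarrow> bool" where
  "periodic_orbit m u p q \<longleftrightarrow>
     (\<forall>i j. orbit m u (i + q) j = orbit m u i j \<and> orbit m u i (j + int p) = orbit m u i j)"

definition prefix_seq :: "(int \<Rightarrow> int) \<Rightarrow> nat \<Rightarrow> int list" where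
  "prefix_seq u n = map (\<lambda>k. u (int k)) [0..<n]"

fun nabla :: "nat \<Rightarrow> int list \<Rightarrow> nat \<Rightarrow> nat \<Rightarrow> int" where
  "nabla m xs 0 j = (xs ! j) mod int m"
| "nabla m xs (Suc i) j = (- nabla m xs i j - nabla m xs i (j + 1)) mod int m"

definition tri_count :: "nat \<Rightarrow> int list \<Rightarrow> int \<Rightarrow> nat" where
  "tri_count m xs x = card {(i, j). i + j < length xs \<and> nabla m xs i j = x}"

definition balanced :: "nat \<Rightarrow> int list \<Rightarrow> bool" where
  "balanced m xs \<longleftrightarrow>
     (\<forall>x \<in> {0..<int m}. \<forall>y \<in> {0..<int m}. tri_count m xs x = tri_count m xs y)"

end

theory Submission
  imports Defs "HOL-Computational_Algebra.Primes"
begin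

lemma pascal_sum:
  fixes f :: "nat \<Rightarrow> int"
  shows "(\<Sum>k\<le>Suc i. int (Suc i choose k) * f k) =
         (\<Sum>k\<le>i. int (i choose k) * f k) + (\<Sum>k\<le>i. int (i choose k) * f (Suc k))"
proof -
  have "(\<Sum>k\<le>Suc i. int (Suc i choose k) * f k) = f 0 + (\<Sum>k\<le>i. int (Suc i choose Suc k) * f (Suc k))"
    by (subst sum.atMost_Suc_shift) simp
  also have "\<dots> = f 0 + (\<Sum>k\<le>i. int (i choose k) * f (Suc k)) + (\<Sum>k\<le>i. int (i choose Suc k) * f (Suc k))"
    by (simp add: sum.distrib algebra_simps)
  also have "(\<Sum>k\<le>i. int (i choose Suc k) * f (Suc k)) = (\<Sum>k\<le>Suc i. int (i choose k) * f k) - f 0"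
    by (subst sum.atMost_Suc_shift) simp
  also have "(\<Sum>k\<le>Suc i. int (i choose k) * f k) = (\<Sum>k\<le>i. int (i choose k) * f k)"
    by simp
  finally show ?thesis by simp
qed

lemma iter_binom:
  fixes g :: "nat \<Rightarrow> int \<Rightarrow> int" and M h :: int
  assumes step: "\<And>i j. M dvd (g (Suc i) j + g i j + g i (j + h))"
  shows "M dvd (g i j - (-1)^i * (\<Sum>k\<le>i. int (i choose k) * g 0 (j + int k * h)))"
proof (induction i arbitrary: j)
  case 0 then show ?case by simp
next
  case (Suc i)
  define S where "S = (\<lambda>j. (\<Sum>k\<le>i. int (i choose k) * g 0 (j + int k * h)))"
  have IH1: "M dvd (g i j - (-1)^i * S j)" using Suc.IH by (simp add: S_def)
  have IH2: "M dvd (g i (j + h) - (-1)^i * S (j + h))" using Suc.IH[of "j+h"] by (simp add: S_def)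
  have P: "(\<Sum>k\<le>Suc i. int (Suc i choose k) * g 0 (j + int k * h)) = S j + S (j + h)"
    unfolding S_def by (subst pascal_sum) (simp add: algebra_simps)
  have "g (Suc i) j - (-1)^(Suc i) * (S j + S (j + h)) =
        (g (Suc i) j + g i j + g i (j + h)) - (g i j - (-1)^i * S j) - (g i (j + h) - (-1)^i * S (j + h))"
    by (simp add: algebra_simps)
  also have "M dvd \<dots>" using dvd_diff[OF dvd_diff[OF step IH1] IH2] .
  finally have "M dvd g (Suc i) j - (-1)^(Suc i) * (S j + S (j + h))" .
  then show ?case using P by simp
qed

lemma mod_diff_dvd: "(M::int) dvd (x mod M - x)"
proof -
  have "x mod M - x = - ((x div M) * M)" using div_mult_mod_eq[of x M] by linarith
  then show ?thesis by simp
qed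

lemma mod_step_dvd: "(M::int) dvd ((- a - b) mod M + a + b)"
proof -
  have "(- a - b) mod M + a + b = (- a - b) mod M - (- a - b)" by simp
  also have "M dvd \<dots>" by (rule mod_diff_dvd)
  finally show ?thesis .
qed

lemma orbit_frob:
  assumes p: "prime p" "p > 2"
  shows "int p dvd (orbit p u (i + p) j + orbit p u i j + orbit p u i (j + int p))"
proof -
  define g where "g = (\<lambda>i' j. orbit p u (i + i') j)"
  have st: "int p dvd (g (Suc i') j + g i' j + g i' (j + 1))" for i' j
    unfolding g_def by (simp add: mod_step_dvd)
  have A: "int p dvd (g p j - (-1)^p * (\<Sum>k\<le>p. int (p choose k) * g 0 (j + int k * 1)))"
    by (rule iter_binom[where g=g and M="int p" and h=1, OF st])
  have odd: "odd p" using p prime_odd_nat by blast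
  define F where "F = (\<lambda>k. g 0 (j + int k))"
  have B: "int p dvd ((\<Sum>k\<le>p. int (p choose k) * F k) - F 0 - F p)"
  proof -
    have "(\<Sum>k\<le>p. int (p choose k) * F k) - F 0 - F p =
          (\<Sum>k\<le>p. int (p choose k) * F k - (if k = 0 then F 0 else 0) - (if k = p then F p else 0))"
      using p by (simp add: sum_subtractf)
    also have "int p dvd \<dots>"
    proof (rule dvd_sum)
      fix k assume k: "k \<in> {..p}"
      show "int p dvd int (p choose k) * F k - (if k = 0 then F 0 else 0) - (if k = p then F p else 0)"
      proof (cases "k = 0 \<or> k = p")
        case True then show ?thesis using p by auto
      next
        case False
        then have "p dvd (p choose k)" using k p by (intro dvd_choose_prime) auto
        then have "int p dvd int (p choose k)" by simp
        then show ?thesis using False by simp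
      qed
    qed
    finally show ?thesis .
  qed
  have E: "orbit p u (i + p) j + orbit p u i j + orbit p u i (j + int p) =
     (g p j - (-1)^p * (\<Sum>k\<le>p. int (p choose k) * g 0 (j + int k * 1))) - ((\<Sum>k\<le>p. int (p choose k) * F k) - F 0 - F p)"
    using odd by (simp add: g_def F_def)
  show ?thesis unfolding E using A B by (rule dvd_diff)
qed

lemma orbit_24p:
  assumes p: "prime p" "p > 2"
  shows "int p dvd (orbit p u (24 * p) j - (\<Sum>t\<le>24. int (24 choose t) * u (j + int t * int p)))"
proof -
  define g where "g = (\<lambda>t j. orbit p u (t * p) j)"
  have st: "int p dvd (g (Suc t) j + g t j + g t (j + int p))" for t j
    unfolding g_def using orbit_frob[OF p, of u "t * p" j] by (simp add: add.commute)
  have A: "int p dvd (g 24 j - (-1)^24 * (\<Sum>k\<le>24. int (24 choose k) * g 0 (j + int k * int p)))"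
    by (rule iter_binom[where g=g and M="int p" and h="int p", OF st])
  have B: "int p dvd ((\<Sum>k\<le>24. int (24 choose k) * g 0 (j + int k * int p)) - (\<Sum>t\<le>24. int (24 choose t) * u (j + int t * int p)))"
    unfolding sum_subtractf[symmetric] g_def
    by (intro dvd_sum) (simp add: right_diff_distrib[symmetric] mod_diff_dvd)
  show ?thesis using dvd_add[OF A B] by (simp add: g_def mult.commute)
qed

definition Dn :: "int list \<Rightarrow> nat \<Rightarrow> int" where "Dn A s = A!s + A!(23 - s)"
definition Dz :: "int list \<Rightarrow> int \<Rightarrow> int" where "Dz A n = Dn A (nat (n mod 24))"
definition Gz :: "int list \<Rightarrow> int \<Rightarrow> int" where
  "Gz A n = 24 * A!(nat (n mod 24)) - (n mod 24) * Dz A n"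
definition opP :: "int \<Rightarrow> (int \<Rightarrow> int) \<Rightarrow> int \<Rightarrow> int" where
  "opP h f j = (\<Sum>t\<le>24. int (24 choose t) * f (j + int t * h)) - f j"

lemma sumX:
  assumes r: "r < 24"
  shows "(\<Sum>s = 1..24. B!(s-1) * X24 s (r+1)) = B!r + B!(23-r)"
proof -
  have ne: "r + 1 \<noteq> 24 - r" using r by arith
  have "(\<Sum>s = 1..24. B!(s-1) * X24 s (r+1)) =
        (\<Sum>s = 1..24. (if s = r + 1 then B!(s-1) else 0)) + (\<Sum>s = 1..24. (if s = 24 - r then B!(s-1) else 0))"
    unfolding sum.distrib[symmetric] X24_def
    by (rule sum.cong) (use ne in \<open>auto simp: algebra_simps\<close>)
  also have "\<dots> = B!r + B!(23-r)" using r by (simp add: sum.delta Suc_diff_Suc)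
  finally show ?thesis .
qed

lemma U:
  assumes A: "length A = 24" and p: "p > 0"
  shows "int p dvd 24 * IAP p (pi_m p A) (times_X24 p (pi_m p A)) n - (Gz A n + n * Dz A n)"
proof -
  define r where "r = nat (n mod 24)"
  define q where "q = n div 24"
  have r24: "r < 24" unfolding r_def by simp
  have rn: "int r = n mod 24" unfolding r_def by simp
  have piA: "pi_m p A ! k = A ! k mod int p" if "k < 24" for k using that A by (simp add: pi_m_def)
  have tX0: "times_X24 p B ! r = (\<Sum>s = 1..24. B!(s-1) * X24 s (r+1)) mod int p" for B
    using r24 by (simp add: times_X24_def)
  have tX: "times_X24 p (pi_m p A) ! r = (pi_m p A ! r + pi_m p A ! (23 - r)) mod int p"
    unfolding tX0 by (simp only: sumX[OF r24])
  have I: "IAP p (pi_m p A) (times_X24 p (pi_m p A)) n =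
           (A!r mod int p + q * ((A!r mod int p + A!(23-r) mod int p) mod int p)) mod int p"
    unfolding IAP_def r_def[symmetric] q_def[symmetric] tX using r24 by (simp add: piA)
  have "(24 * IAP p (pi_m p A) (times_X24 p (pi_m p A)) n) mod int p = (24 * (A!r + q * (A!r + A!(23-r)))) mod int p"
  proof -
    have e1: "(A!r mod int p + q * ((A!r mod int p + A!(23-r) mod int p) mod int p)) mod int p
             = (A!r + q * (A!r + A!(23-r))) mod int p"
      by (intro mod_add_cong mod_mult_cong) (simp_all add: mod_add_eq)
    show ?thesis unfolding I by (intro mod_mult_cong) (simp_all add: e1)
  qed
  also have "24 * (A!r + q * (A!r + A!(23-r))) = Gz A n + n * Dz A n"
  proof -
    have "n = 24 * q + int r" unfolding q_def rn by simp
    then show ?thesis unfolding Gz_def Dz_def Dn_def r_def[symmetric] rn[symmetric]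
      by (simp add: algebra_simps)
  qed
  finally show ?thesis by (simp add: mod_eq_dvd_iff)
qed

lemma per24:
  assumes "\<And>x. f (x + 24) = f x"
  shows "opP h f (j + 24) = opP h f j"
proof -
  have "f (j + 24 + y) = f (j + y)" for y using assms[of "j + y"] by (simp add: algebra_simps)
  then show ?thesis unfolding opP_def by (simp add: assms)
qed

lemma Dz24: "Dz A (x + 24) = Dz A x" by (simp add: Dz_def)
lemma Gz24: "Gz A (x + 24) = Gz A x" by (simp add: Gz_def Dz_def)

lemma per_consequence:
  assumes p: "prime p" "p > 24" and A: "length A = 24"
    and per: "periodic_orbit p (IAP p (pi_m p A) (times_X24 p (pi_m p A))) (24 * p) (24 * p)"
  shows "int p dvd opP (int p) (Gz A) j \<and> int p dvd opP (int p) (Dz A) j"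
proof -
  define u where "u = IAP p (pi_m p A) (times_X24 p (pi_m p A))"
  have p0: "p > 0" "p > 2" using p by auto
  have R1: "int p dvd (\<Sum>t\<le>24. int (24 choose t) * u (j + int t * int p)) - u j" for j
  proof -
    have "orbit p u (0 + 24 * p) j = orbit p u 0 j" using per unfolding periodic_orbit_def u_def by blast
    then have "orbit p u (24 * p) j = u j mod int p" by simp
    then have "int p dvd (u j mod int p - (\<Sum>t\<le>24. int (24 choose t) * u (j + int t * int p)))"
      using orbit_24p[OF p(1) p0(2), of u j] by simp
    from dvd_diff[OF this mod_diff_dvd[of "int p" "u j"]]
    have "int p dvd - ((\<Sum>t\<le>24. int (24 choose t) * u (j + int t * int p)) - u j)" by simp
    then show ?thesis by (simp only: dvd_minus_iff)
  qed
  define Phi where "Phi = (\<lambda>j. opP (int p) (Gz A) j + j * opP (int p) (Dz A) j)"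
  have R3: "int p dvd Phi j" for j
  proof -
    have d1: "int p dvd 24 * ((\<Sum>t\<le>24. int (24 choose t) * u (j + int t * int p)) - u j)"
      by (rule dvd_mult[OF R1])
    have d2: "int p dvd (\<Sum>t\<le>24. int (24 choose t) * (24 * u (j + int t * int p) - (Gz A (j + int t * int p) + (j + int t * int p) * Dz A (j + int t * int p))))
           - (24 * u j - (Gz A j + j * Dz A j))"
    proof -
      have Un: "int p dvd 24 * u n - (Gz A n + n * Dz A n)" for n using U[OF A p0(1)] unfolding u_def .
      show ?thesis by (rule dvd_diff[OF dvd_sum Un]) (rule dvd_mult[OF Un])
    qed
    have d3: "int p dvd int p * (\<Sum>t\<le>24. int (24 choose t) * int t * Dz A (j + int t * int p))"
      by simp
    have PE: "Phi j = 24 * ((\<Sum>t\<le>24. int (24 choose t) * u (j + int t * int p)) - u j)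
           - ((\<Sum>t\<le>24. int (24 choose t) * (24 * u (j + int t * int p) - (Gz A (j + int t * int p) + (j + int t * int p) * Dz A (j + int t * int p))))
           - (24 * u j - (Gz A j + j * Dz A j)))
           - int p * (\<Sum>t\<le>24. int (24 choose t) * int t * Dz A (j + int t * int p))"
      unfolding Phi_def opP_def
      by (simp add: algebra_simps sum.distrib sum_subtractf sum_distrib_left)
    show ?thesis by (subst PE) (rule dvd_diff[OF dvd_diff[OF d1 d2] d3])
  qed
  have "int p dvd Phi (j + 24) - Phi j" using R3 by (simp add: dvd_diff)
  moreover have "Phi (j + 24) - Phi j = 24 * opP (int p) (Dz A) j"
    unfolding Phi_def using per24[of "Gz A", OF Gz24] per24[of "Dz A", OF Dz24]
    by (simp add: algebra_simps)
  ultimately have "int p dvd 24 * opP (int p) (Dz A) j" by simp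
  moreover have "\<not> int p dvd 24"
  proof
    assume "int p dvd 24"
    then have "p dvd 24" by presburger
    then have "p \<le> 24" by (rule dvd_imp_le) simp
    then show False using p by simp
  qed
  moreover have "prime (int p)" using p by simp
  ultimately have D: "int p dvd opP (int p) (Dz A) j" by (simp add: prime_dvd_mult_iff)
  then have "int p dvd j * opP (int p) (Dz A) j" by simp
  then have "int p dvd Phi j - j * opP (int p) (Dz A) j" using R3 by (simp add: dvd_diff)
  then show ?thesis using D by (simp add: Phi_def)
qed

definition aco :: "int list" where
  "aco = [-14877151663, 33733268828, -39209998903, 24332847240, 0, -14618605282, 9761484303, 6243225984, -15655307305, 8729493830, 7240423736, -15886408200, 8469722745, 7452995900, -15863124495, 8446439040, 7240423736, -15603353410, 8677539935, 6243225984, -14571362937, 9714241958]"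

definition cB :: int where "cB = 117574722720"

definition binom24 :: "int list" where
  "binom24 = [1, 24, 276, 2024, 10626, 42504, 134596, 346104, 735471, 1307504, 1961256, 2496144, 2704156, 2496144, 1961256, 1307504, 735471, 346104, 134596, 42504, 10626, 2024, 276, 24, 1]"

fun pas :: "nat \<Rightarrow> int list" where
  "pas 0 = [1]"
| "pas (Suc n) = (let r = pas n in map2 (+) (0 # r) (r @ [0]))"

lemma pas_len: "length (pas n) = Suc n"
  by (induction n) (simp_all add: Let_def)

lemma pas_nth: "k \<le> n \<Longrightarrow> pas n ! k = int (n choose k)"
proof (induction n arbitrary: k)
  case 0 then show ?case by simp
next
  case (Suc n)
  show ?case
  proof (cases k)
    case 0 then show ?thesis using pas_len[of n] Suc.IH[of 0] by (simp add: Let_def nth_append)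
  next
    case (Suc k')
    have l: "length (pas n) = Suc n" by (rule pas_len)
    have a: "(0 # pas n) ! k = int (n choose k')" using Suc Suc.IH[of k'] \<open>k \<le> Suc n\<close> by simp
    have b: "(pas n @ [0]) ! k = int (n choose k)"
    proof (cases "k \<le> n")
      case True then show ?thesis using Suc.IH[of k] l by (simp add: nth_append)
    next
      case False then have "k = Suc n" using \<open>k \<le> Suc n\<close> by simp
      then show ?thesis using l by (simp add: nth_append)
    qed
    have "pas (Suc n) ! k = (0 # pas n) ! k + (pas n @ [0]) ! k"
      using l \<open>k \<le> Suc n\<close> by (simp add: Let_def)
    then show ?thesis using a b Suc by simp
  qed
qed

lemma pas24: "pas 24 = binom24"
  by code_simp

lemma binom_eq: "t \<le> 24 \<Longrightarrow> int (24 choose t) = binom24 ! t"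
  using pas_nth[of t 24] pas24 by simp

lemma filt:
  fixes i n :: nat
  assumes i: "i < 24" and n: "n < 24"
  shows "{t. t \<le> 24 \<and> (i + t) mod 24 = n} = (if i \<le> n then (if i = n then {0, 24} else {n - i}) else {n + 24 - i})"
proof (rule set_eqI)
  fix t
  show "t \<in> {t. t \<le> 24 \<and> (i + t) mod 24 = n} \<longleftrightarrow> t \<in> (if i \<le> n then (if i = n then {0, 24} else {n - i}) else {n + 24 - i})"
  proof (cases "t \<le> 24")
    case True
    have m: "(i+t) mod 24 = (if i + t < 24 then i + t else i + t - 24)"
      using True i by (simp add: mod_if)
    show ?thesis unfolding mem_Collect_eq m using True i n by auto
  next
    case False then show ?thesis using i n by auto
  qed
qed

definition Kc :: "nat \<Rightarrow> nat \<Rightarrow> int" where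
  "Kc i n = (if i \<le> n then (if i = n then 1 else binom24 ! (n - i)) else binom24 ! (n + 24 - i))"

lemma K_eq:
  assumes i: "i < 24" and n: "n < 24"
  shows "(\<Sum>t\<le>24. (if (i+t) mod 24 = n then int (24 choose t) else 0)) - (if i mod 24 = n then 1 else 0) = Kc i n"
proof -
  have "(\<Sum>t\<le>24. (if (i+t) mod 24 = n then int (24 choose t) else 0)) =
        (\<Sum>t\<in>{t\<in>{..24}. (i+t) mod 24 = n}. int (24 choose t))"
    by (rule sum.inter_filter[symmetric]) simp
  also have "{t\<in>{..24}. (i+t) mod 24 = n} = {t. t \<le> 24 \<and> (i + t) mod 24 = n}" by auto
  also have "\<dots> = (if i \<le> n then (if i = n then {0, 24} else {n - i}) else {n + 24 - i})"
    by (rule filt[OF i n])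
  finally have S: "(\<Sum>t\<le>24. (if (i+t) mod 24 = n then int (24 choose t) else 0)) =
     (\<Sum>t\<in>(if i \<le> n then (if i = n then {0, 24} else {n - i}) else {n + 24 - i}). int (24 choose t))" .
  show ?thesis
    unfolding S Kc_def using i n by (auto simp: binom_eq)
qed

definition coefL :: "nat \<Rightarrow> int" where
  "coefL n = sum_list (map (\<lambda>i. aco!i * Kc i n) [0..<22])"

lemma coefL_vals: "map coefL [0..<24] = map (\<lambda>n. if n < 3 then cB else 0) [0..<24]"
  by code_simp

lemma lin_collect:
  fixes y :: "nat \<Rightarrow> int"
  assumes "finite T" "finite N"
  shows "(\<Sum>t\<in>T. c t * (\<Sum>n\<in>N. (if g t = n then y n else 0))) =
         (\<Sum>n\<in>N. (\<Sum>t\<in>T. (if g t = n then c t else 0)) * y n)"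
proof -
  have "(\<Sum>t\<in>T. c t * (\<Sum>n\<in>N. (if g t = n then y n else 0))) =
        (\<Sum>t\<in>T. \<Sum>n\<in>N. (if g t = n then c t else 0) * y n)"
    by (auto simp: sum_distrib_left intro!: sum.cong)
  also have "\<dots> = (\<Sum>n\<in>N. \<Sum>t\<in>T. (if g t = n then c t else 0) * y n)"
    by (rule sum.swap)
  also have "\<dots> = (\<Sum>n\<in>N. (\<Sum>t\<in>T. (if g t = n then c t else 0)) * y n)"
    by (simp add: sum_distrib_right)
  finally show ?thesis .
qed

lemma y_expand:
  fixes y :: "nat \<Rightarrow> int"
  assumes per: "\<And>n. y (n + 24) = y n"
  shows "y k = (\<Sum>n<24. (if k mod 24 = n then y n else 0))"
proof -
  have "y k = y (k mod 24)"
  proof (induction k rule: less_induct)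
    case (less k)
    show ?case
    proof (cases "k < 24")
      case True then show ?thesis by simp
    next
      case False
      then have "y k = y (k - 24 + 24)" by simp
      also have "\<dots> = y (k - 24)" by (rule per)
      also have "\<dots> = y ((k - 24) mod 24)" using less.IH[of "k - 24"] False by simp
      also have "(k - 24) mod 24 = k mod 24" using False by (simp add: mod_if)
      finally show ?thesis .
    qed
  qed
  also have "\<dots> = (\<Sum>n<24. (if k mod 24 = n then y n else 0))"
    by (simp add: sum.delta)
  finally show ?thesis .
qed


lemma collect:
  fixes y :: "nat \<Rightarrow> int"
  assumes per: "\<And>n. y (n + 24) = y n"
  shows "(\<Sum>i<22. aco!i * ((\<Sum>t\<le>24. int (24 choose t) * y (i+t)) - y i)) = (\<Sum>n<24. coefL n * y n)"
proof -
  have E: "y k = (\<Sum>n<24. (if k mod 24 = n then y n else 0))" for k by (rule y_expand[where y=y, OF per])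
  have L1: "(\<Sum>t\<le>24. int (24 choose t) * y (i+t)) =
        (\<Sum>n<24. (\<Sum>t\<le>24. (if (i+t) mod 24 = n then int (24 choose t) else 0)) * y n)" for i
  proof -
    have "(\<Sum>t\<le>24. int (24 choose t) * y (i+t)) =
          (\<Sum>t\<le>24. int (24 choose t) * (\<Sum>n<24. (if (i+t) mod 24 = n then y n else 0)))"
      by (rule sum.cong[OF refl]) (subst E, rule refl)
    also have "\<dots> = (\<Sum>n<24. (\<Sum>t\<le>24. (if (i+t) mod 24 = n then int (24 choose t) else 0)) * y n)"
      by (rule lin_collect) auto
    finally show ?thesis .
  qed
  have L2: "y i = (\<Sum>n<24. (if i mod 24 = n then 1 else 0) * y n)" for i
  proof -
    have "y i = (\<Sum>n<24. (if i mod 24 = n then y n else 0))" by (rule E)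
    also have "\<dots> = (\<Sum>n<24. (if i mod 24 = n then 1 else 0) * y n)" by (rule sum.cong) auto
    finally show ?thesis .
  qed
  define K where "K = (\<lambda>i n. (\<Sum>t\<le>24. (if (i+t) mod 24 = n then int (24 choose t) else 0)) - (if i mod 24 = n then 1 else 0))"
  have "(\<Sum>i<22. aco!i * ((\<Sum>t\<le>24. int (24 choose t) * y (i+t)) - y i)) =
        (\<Sum>i<22. aco!i * (\<Sum>n<24. K i n * y n))"
  proof (rule sum.cong[OF refl])
    fix i
    have "(\<Sum>t\<le>24. int (24 choose t) * y (i+t)) - y i = (\<Sum>n<24. K i n * y n)"
      unfolding L1 K_def by (subst L2) (simp add: sum_subtractf[symmetric] left_diff_distrib)
    then show "aco!i * ((\<Sum>t\<le>24. int (24 choose t) * y (i+t)) - y i) = aco!i * (\<Sum>n<24. K i n * y n)"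
      by simp
  qed
  also have "\<dots> = (\<Sum>i<22. \<Sum>n<24. aco!i * K i n * y n)"
    by (simp add: sum_distrib_left mult.assoc)
  also have "\<dots> = (\<Sum>n<24. \<Sum>i<22. aco!i * K i n * y n)"
    by (rule sum.swap)
  also have "\<dots> = (\<Sum>n<24. coefL n * y n)"
  proof (rule sum.cong[OF refl])
    fix n :: nat
    assume nn: "n \<in> {..<24}"
    have "coefL n = (\<Sum>i<22. aco!i * Kc i n)"
      unfolding coefL_def
      by (simp add: sum_set_upt_conv_sum_list_nat[symmetric] atLeast0LessThan)
    also have "\<dots> = (\<Sum>i<22. aco!i * K i n)"
    proof (rule sum.cong[OF refl])
      fix i assume "i \<in> {..<22::nat}"
      then have "K i n = Kc i n" unfolding K_def by (intro K_eq) (use nn in auto)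
      then show "aco!i * Kc i n = aco!i * K i n" by simp
    qed
    finally have "coefL n = (\<Sum>i<22. aco!i * K i n)" .
    then show "(\<Sum>i<22. aco!i * K i n * y n) = coefL n * y n"
      by (simp add: sum_distrib_right)
  qed
  finally show ?thesis .
qed


lemma bez:
  fixes f :: "int \<Rightarrow> int"
  assumes per: "\<And>x. f x = f (x mod 24)"
  shows "(\<Sum>i<22. aco!i * opP h f (j + int i * h)) = cB * (f j + f (j + h) + f (j + 2 * h))"
proof -
  define y where "y = (\<lambda>n::nat. f (j + int n * h))"
  have yp: "y (n + 24) = y n" for n
  proof -
    have "y (n + 24) = f ((j + int n * h) + 24 * h)" by (simp add: y_def algebra_simps)
    also have "\<dots> = f ((j + int n * h + 24 * h) mod 24)" by (rule per)
    also have "(j + int n * h + 24 * h) mod 24 = (j + int n * h) mod 24" by simp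
    also have "f \<dots> = y n" using per[of "j + int n * h"] by (simp add: y_def)
    finally show ?thesis .
  qed
  have "opP h f (j + int i * h) = (\<Sum>t\<le>24. int (24 choose t) * y (i+t)) - y i" for i
    unfolding opP_def y_def by (simp add: algebra_simps)
  then have "(\<Sum>i<22. aco!i * opP h f (j + int i * h)) = (\<Sum>i<22. aco!i * ((\<Sum>t\<le>24. int (24 choose t) * y (i+t)) - y i))"
    by simp
  also have "\<dots> = (\<Sum>n<24. coefL n * y n)" by (rule collect[where y=y, OF yp])
  also have "\<dots> = (\<Sum>n<24. (if n < 3 then cB else 0) * y n)"
  proof (rule sum.cong[OF refl])
    fix n assume "n \<in> {..<24::nat}"
    then have "n \<in> set [0..<24]" by simp
    then have "coefL n = (if n < 3 then cB else 0)"
      using coefL_vals unfolding map_eq_conv by blast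
    then show "coefL n * y n = (if n < 3 then cB else 0) * y n" by simp
  qed
  also have "\<dots> = (\<Sum>n<3. cB * y n)"
  proof -
    have "(\<Sum>n<24. (if n < 3 then cB else 0) * y n) = (\<Sum>n\<in>{..<24} \<inter> {n. n < 3}. cB * y n)"
      by (simp add: sum.inter_restrict) (rule sum.cong, auto)
    also have "{..<24} \<inter> {n. n < 3} = {..<(3::nat)}" by auto
    finally show ?thesis .
  qed
  also have "\<dots> = cB * (y 0 + y 1 + y 2)"
    by (simp add: lessThan_Suc algebra_simps eval_nat_numeral)
  also have "\<dots> = cB * (f j + f (j + h) + f (j + 2 * h))" by (simp add: y_def)
  finally show ?thesis .
qed

lemma cB_pos: "cB > 0" by (simp add: cB_def)

lemma three_rel:
  assumes p: "prime p" "int p > cB" and per: "\<And>x. f x = f (x mod 24)"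
    and d: "\<And>j. int p dvd opP (int p) f j"
  shows "int p dvd f j + f (j + int p) + f (j + 2 * int p)"
proof -
  have "int p dvd (\<Sum>i<22. aco!i * opP (int p) f (j + int i * int p))"
    by (intro dvd_sum dvd_mult d)
  then have "int p dvd cB * (f j + f (j + int p) + f (j + 2 * int p))"
    using bez[of f "int p" j, OF per] by simp
  moreover have "\<not> int p dvd cB"
  proof
    assume "int p dvd cB"
    then have "int p \<le> cB" using cB_pos by (rule zdvd_imp_le)
    then show False using p by simp
  qed
  moreover have "prime (int p)" using p by simp
  ultimately show ?thesis by (simp add: prime_dvd_mult_iff)
qed

lemma odd_sq: "odd (P::int) \<Longrightarrow> 24 dvd 3 * P * P - 3"
proof -
  assume "odd P"
  then obtain q where q: "P = 2 * q + 1" by (metis oddE)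
  have "even (q * (q + 1))" by simp
  then obtain r where r: "q * (q + 1) = 2 * r" by blast
  have "3 * P * P - 3 = 12 * (q * (q + 1))" unfolding q by (simp add: algebra_simps)
  also have "\<dots> = 24 * r" using r by simp
  finally show ?thesis by simp
qed

lemma per3:
  assumes p: "prime p" "p > 3" and per: "\<And>x. f x = f (x mod 24)"
    and T: "\<And>j. int p dvd f j + f (j + int p) + f (j + 2 * int p)"
  shows "\<And>j k. int p dvd f (j + 3 * int k) - f j" and "int p dvd f 0 + f 1 + f 2"
proof -
  have s1: "int p dvd f (j + 3 * int p) - f j" for j
  proof -
    have eqs: "j + int p + int p = j + 2 * int p" "j + int p + 2 * int p = j + 3 * int p" by simp_all
    have T1: "int p dvd f (j + int p) + f (j + 2 * int p) + f (j + 3 * int p)"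
      using T[of "j + int p"] unfolding eqs .
    have "int p dvd (f (j + int p) + f (j + 2 * int p) + f (j + 3 * int p)) - (f j + f (j + int p) + f (j + 2 * int p))"
      using T1 T[of j] by (rule dvd_diff)
    moreover have "(f (j + int p) + f (j + 2 * int p) + f (j + 3 * int p)) - (f j + f (j + int p) + f (j + 2 * int p))
        = f (j + 3 * int p) - f j" by simp
    ultimately show ?thesis by simp
  qed
  have s2: "int p dvd f (j + 3 * int p * int k) - f j" for j k
  proof (induction k)
    case 0 then show ?case by simp
  next
    case (Suc k)
    have E: "f (j + 3 * int p * int (Suc k)) - f j = (f ((j + 3 * int p * int k) + 3 * int p) - f (j + 3 * int p * int k)) + (f (j + 3 * int p * int k) - f j)"
      by (simp add: algebra_simps)
    show ?case by (subst E) (rule dvd_add[OF s1[of "j + 3 * int p * int k"] Suc.IH])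
  qed
  have odd: "odd (int p)" using p prime_odd_nat by simp
  have s3: "int p dvd f (j + 3) - f j" for j
  proof -
    have "f (j + 3 * int p * int p) = f (j + 3)"
    proof -
      obtain r where r: "3 * int p * int p - 3 = 24 * r" using odd_sq[OF odd] by (auto simp: dvd_def)
      have eq: "j + 3 * int p * int p = (j + 3) + 24 * r" using r by simp
      have "(j + 3 * int p * int p) mod 24 = (j + 3) mod 24" unfolding eq by (rule mod_mult_self2)
      then show ?thesis using per[of "j + 3 * int p * int p"] per[of "j + 3"] by simp
    qed
    then show ?thesis using s2[of j p] by simp
  qed
  show s4: "int p dvd f (j + 3 * int k) - f j" for j k
  proof (induction k)
    case 0 then show ?case by simp
  next
    case (Suc k)
    have E: "f (j + 3 * int (Suc k)) - f j = (f ((j + 3 * int k) + 3) - f (j + 3 * int k)) + (f (j + 3 * int k) - f j)"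
      by (simp add: algebra_simps)
    show ?case by (subst E) (rule dvd_add[OF s3[of "j + 3 * int k"] Suc.IH])
  qed
  have T0: "int p dvd f 0 + f (int p) + f (2 * int p)" using T[of 0] by simp
  have "p mod 3 = 1 \<or> p mod 3 = 2"
  proof -
    have "p mod 3 \<noteq> 0"
    proof
      assume "p mod 3 = 0"
      then have "3 dvd p" by auto
      then have "3 = p" using p prime_nat_iff[of p] by auto
      then show False using p by simp
    qed
    then show ?thesis by auto
  qed
  then show "int p dvd f 0 + f 1 + f 2"
  proof
    assume m: "p mod 3 = 1"
    define q where "q = p div 3"
    have "p = 1 + 3 * q" using div_mult_mod_eq[of p 3] m unfolding q_def by linarith
    then have pq: "int p = 1 + 3 * int q" by simp
    have a: "int p dvd f (int p) - f 1" using s4[of 1 q] pq by simp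
    have b: "int p dvd f (2 * int p) - f 2" using s4[of 2 "2 * q"] pq by (simp add: algebra_simps)
    have E: "f 0 + f 1 + f 2 = (f 0 + f (int p) + f (2 * int p)) - (f (int p) - f 1) - (f (2 * int p) - f 2)" by simp
    show ?thesis by (subst E) (rule dvd_diff[OF dvd_diff[OF T0 a] b])
  next
    assume m: "p mod 3 = 2"
    define q where "q = p div 3"
    have "p = 2 + 3 * q" using div_mult_mod_eq[of p 3] m unfolding q_def by linarith
    then have pq: "int p = 2 + 3 * int q" by simp
    have a: "int p dvd f (int p) - f 2" using s4[of 2 q] pq by simp
    have b: "int p dvd f (2 * int p) - f 1" using s4[of 1 "2 * q + 1"] pq by (simp add: algebra_simps)
    have E: "f 0 + f 1 + f 2 = (f 0 + f (int p) + f (2 * int p)) - (f (int p) - f 2) - (f (2 * int p) - f 1)" by simp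
    show ?thesis by (subst E) (rule dvd_diff[OF dvd_diff[OF T0 a] b])
  qed
qed

definition vv :: "int list" where "vv = [-8,1,7,-9,3,6,-10,5,5,-11,7,4,-12,9,3,-13,11,2,-14,13,1,-15,15,0]"
definition ww :: "int list" where "ww = [-1,0,1,-1,0,1,-1,0,1,-1,0,1,-1,0,1,-1,0,1,-1,0,1,-1,0,1]"

lemma Gz_per: "Gz A x = Gz A (x mod 24)" by (simp add: Gz_def Dz_def)
lemma Dz_per: "Dz A x = Dz A (x mod 24)" by (simp add: Dz_def)

lemma lin_final:
  assumes p: "prime p" "int p > cB" and A: "length A = 24"
    and per: "periodic_orbit p (IAP p (pi_m p A) (times_X24 p (pi_m p A))) (24 * p) (24 * p)"
  shows "list_all (\<lambda>k. int p dvd 48 * (A!k - A!1 * vv!k - A!23 * ww!k)) [0..<24]"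
proof -
  have p24: "p > 24" using p(2) by (simp add: cB_def)
  have pc: "int p dvd opP (int p) (Gz A) j \<and> int p dvd opP (int p) (Dz A) j" for j
    by (rule per_consequence[OF p(1) p24 A per])
  have TG: "int p dvd Gz A j + Gz A (j + int p) + Gz A (j + 2 * int p)" for j
    using three_rel[OF p, of "Gz A", OF Gz_per] pc by blast
  have TD: "int p dvd Dz A j + Dz A (j + int p) + Dz A (j + 2 * int p)" for j
    using three_rel[OF p, of "Dz A", OF Dz_per] pc by blast
  have p3: "p > 3" using p24 by simp
  note PG = per3[OF p(1) p3, of "Gz A", OF Gz_per TG]
  note PD = per3[OF p(1) p3, of "Dz A", OF Dz_per TD]
  have Dr: "int p dvd Dz A (int r) - Dz A (int (r mod 3))" for r
    using PD(1)[of "int (r mod 3)" "r div 3"] by (simp add: of_nat_mod of_nat_div)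
  have Gr: "int p dvd Gz A (int r) - Gz A (int (r mod 3))" for r
    using PG(1)[of "int (r mod 3)" "r div 3"] by (simp add: of_nat_mod of_nat_div)
  have DSg: "int p dvd Dz A 0 + Dz A 1 + Dz A 2" by (rule PD(2))
  have D10: "int p dvd (A!10 + A!13) - (A!1 + A!22)"
    using Dr[of 10] by (simp add: Dz_def Dn_def Gz_def)
  have D11: "int p dvd (A!11 + A!12) - (A!2 + A!21)"
    using Dr[of 11] by (simp add: Dz_def Dn_def Gz_def)
  have D12: "int p dvd (A!12 + A!11) - (A!0 + A!23)"
    using Dr[of 12] by (simp add: Dz_def Dn_def Gz_def)
  have D3: "int p dvd (A!3 + A!20) - (A!0 + A!23)"
    using Dr[of 3] by (simp add: Dz_def Dn_def Gz_def)
  have D4: "int p dvd (A!4 + A!19) - (A!1 + A!22)"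
    using Dr[of 4] by (simp add: Dz_def Dn_def Gz_def)
  have D5: "int p dvd (A!5 + A!18) - (A!2 + A!21)"
    using Dr[of 5] by (simp add: Dz_def Dn_def Gz_def)
  have D6: "int p dvd (A!6 + A!17) - (A!0 + A!23)"
    using Dr[of 6] by (simp add: Dz_def Dn_def Gz_def)
  have D7: "int p dvd (A!7 + A!16) - (A!1 + A!22)"
    using Dr[of 7] by (simp add: Dz_def Dn_def Gz_def)
  have D8: "int p dvd (A!8 + A!15) - (A!2 + A!21)"
    using Dr[of 8] by (simp add: Dz_def Dn_def Gz_def)
  have D9: "int p dvd (A!9 + A!14) - (A!0 + A!23)"
    using Dr[of 9] by (simp add: Dz_def Dn_def Gz_def)
  have DS: "int p dvd (A!0 + A!23) + (A!1 + A!22) + (A!2 + A!21)"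
    using DSg by (simp add: Dz_def Dn_def)
  have G10: "int p dvd (24 * A!10 - 10 * (A!10 + A!13)) - (24 * A!1 - 1 * (A!1 + A!22))"
    using Gr[of 10] by (simp add: Dz_def Dn_def Gz_def)
  have G11: "int p dvd (24 * A!11 - 11 * (A!11 + A!12)) - (24 * A!2 - 2 * (A!2 + A!21))"
    using Gr[of 11] by (simp add: Dz_def Dn_def Gz_def)
  have G12: "int p dvd (24 * A!12 - 12 * (A!12 + A!11)) - (24 * A!0 - 0 * (A!0 + A!23))"
    using Gr[of 12] by (simp add: Dz_def Dn_def Gz_def)
  have G13: "int p dvd (24 * A!13 - 13 * (A!13 + A!10)) - (24 * A!1 - 1 * (A!1 + A!22))"
    using Gr[of 13] by (simp add: Dz_def Dn_def Gz_def)
  have G3: "int p dvd (24 * A!3 - 3 * (A!3 + A!20)) - (24 * A!0 - 0 * (A!0 + A!23))"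
    using Gr[of 3] by (simp add: Dz_def Dn_def Gz_def)
  have G4: "int p dvd (24 * A!4 - 4 * (A!4 + A!19)) - (24 * A!1 - 1 * (A!1 + A!22))"
    using Gr[of 4] by (simp add: Dz_def Dn_def Gz_def)
  have G5: "int p dvd (24 * A!5 - 5 * (A!5 + A!18)) - (24 * A!2 - 2 * (A!2 + A!21))"
    using Gr[of 5] by (simp add: Dz_def Dn_def Gz_def)
  have G6: "int p dvd (24 * A!6 - 6 * (A!6 + A!17)) - (24 * A!0 - 0 * (A!0 + A!23))"
    using Gr[of 6] by (simp add: Dz_def Dn_def Gz_def)
  have G7: "int p dvd (24 * A!7 - 7 * (A!7 + A!16)) - (24 * A!1 - 1 * (A!1 + A!22))"
    using Gr[of 7] by (simp add: Dz_def Dn_def Gz_def)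
  have G8: "int p dvd (24 * A!8 - 8 * (A!8 + A!15)) - (24 * A!2 - 2 * (A!2 + A!21))"
    using Gr[of 8] by (simp add: Dz_def Dn_def Gz_def)
  have G9: "int p dvd (24 * A!9 - 9 * (A!9 + A!14)) - (24 * A!0 - 0 * (A!0 + A!23))"
    using Gr[of 9] by (simp add: Dz_def Dn_def Gz_def)
  have X0: "int p dvd 48 * (A!0 - A!1 * (-8) - A!23 * (-1))"
  proof -
    have E: "48 * (A!0 - A!1 * (-8) - A!23 * (-1)) = (8) * ((A!10 + A!13) - (A!1 + A!22)) + (-8) * ((24 * A!10 - 10 * (A!10 + A!13)) - (24 * A!1 - 1 * (A!1 + A!22))) + (24) * ((A!11 + A!12) - (A!2 + A!21)) + (-24) * ((A!12 + A!11) - (A!0 + A!23)) + (-8) * ((24 * A!13 - 13 * (A!13 + A!10)) - (24 * A!1 - 1 * (A!1 + A!22))) + (24) * ((A!0 + A!23) + (A!1 + A!22) + (A!2 + A!21))"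
      by (simp add: algebra_simps)
    show ?thesis by (subst E) (rule dvd_add[OF dvd_add[OF dvd_add[OF dvd_add[OF dvd_add[OF dvd_mult[OF D10] dvd_mult[OF G10]] dvd_mult[OF D11]] dvd_mult[OF D12]] dvd_mult[OF G13]] dvd_mult[OF DS]])
  qed
  have X2: "int p dvd 48 * (A!2 - A!1 * (7) - A!23 * (1))"
  proof -
    have E: "48 * (A!2 - A!1 * (7) - A!23 * (1)) = (-7) * ((A!10 + A!13) - (A!1 + A!22)) + (7) * ((24 * A!10 - 10 * (A!10 + A!13)) - (24 * A!1 - 1 * (A!1 + A!22))) + (-25) * ((A!11 + A!12) - (A!2 + A!21)) + (-2) * ((24 * A!11 - 11 * (A!11 + A!12)) - (24 * A!2 - 2 * (A!2 + A!21))) + (27) * ((A!12 + A!11) - (A!0 + A!23)) + (-2) * ((24 * A!12 - 12 * (A!12 + A!11)) - (24 * A!0 - 0 * (A!0 + A!23))) + (7) * ((24 * A!13 - 13 * (A!13 + A!10)) - (24 * A!1 - 1 * (A!1 + A!22))) + (-21) * ((A!0 + A!23) + (A!1 + A!22) + (A!2 + A!21))"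
      by (simp add: algebra_simps)
    show ?thesis by (subst E) (rule dvd_add[OF dvd_add[OF dvd_add[OF dvd_add[OF dvd_add[OF dvd_add[OF dvd_add[OF dvd_mult[OF D10] dvd_mult[OF G10]] dvd_mult[OF D11]] dvd_mult[OF G11]] dvd_mult[OF D12]] dvd_mult[OF G12]] dvd_mult[OF G13]] dvd_mult[OF DS]])
  qed
  have X3: "int p dvd 48 * (A!3 - A!1 * (-9) - A!23 * (-1))"
  proof -
    have E: "48 * (A!3 - A!1 * (-9) - A!23 * (-1)) = (6) * ((A!3 + A!20) - (A!0 + A!23)) + (2) * ((24 * A!3 - 3 * (A!3 + A!20)) - (24 * A!0 - 0 * (A!0 + A!23))) + (9) * ((A!10 + A!13) - (A!1 + A!22)) + (-9) * ((24 * A!10 - 10 * (A!10 + A!13)) - (24 * A!1 - 1 * (A!1 + A!22))) + (27) * ((A!11 + A!12) - (A!2 + A!21)) + (-27) * ((A!12 + A!11) - (A!0 + A!23)) + (-9) * ((24 * A!13 - 13 * (A!13 + A!10)) - (24 * A!1 - 1 * (A!1 + A!22))) + (27) * ((A!0 + A!23) + (A!1 + A!22) + (A!2 + A!21))"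
      by (simp add: algebra_simps)
    show ?thesis by (subst E) (rule dvd_add[OF dvd_add[OF dvd_add[OF dvd_add[OF dvd_add[OF dvd_add[OF dvd_add[OF dvd_mult[OF D3] dvd_mult[OF G3]] dvd_mult[OF D10]] dvd_mult[OF G10]] dvd_mult[OF D11]] dvd_mult[OF D12]] dvd_mult[OF G13]] dvd_mult[OF DS]])
  qed
  have X4: "int p dvd 48 * (A!4 - A!1 * (3) - A!23 * (0))"
  proof -
    have E: "48 * (A!4 - A!1 * (3) - A!23 * (0)) = (8) * ((A!4 + A!19) - (A!1 + A!22)) + (2) * ((24 * A!4 - 4 * (A!4 + A!19)) - (24 * A!1 - 1 * (A!1 + A!22))) + (-2) * ((A!10 + A!13) - (A!1 + A!22)) + (2) * ((24 * A!10 - 10 * (A!10 + A!13)) - (24 * A!1 - 1 * (A!1 + A!22))) + (2) * ((24 * A!13 - 13 * (A!13 + A!10)) - (24 * A!1 - 1 * (A!1 + A!22)))"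
      by (simp add: algebra_simps)
    show ?thesis by (subst E) (rule dvd_add[OF dvd_add[OF dvd_add[OF dvd_add[OF dvd_mult[OF D4] dvd_mult[OF G4]] dvd_mult[OF D10]] dvd_mult[OF G10]] dvd_mult[OF G13]])
  qed
  have X5: "int p dvd 48 * (A!5 - A!1 * (6) - A!23 * (1))"
  proof -
    have E: "48 * (A!5 - A!1 * (6) - A!23 * (1)) = (10) * ((A!5 + A!18) - (A!2 + A!21)) + (2) * ((24 * A!5 - 5 * (A!5 + A!18)) - (24 * A!2 - 2 * (A!2 + A!21))) + (-6) * ((A!10 + A!13) - (A!1 + A!22)) + (6) * ((24 * A!10 - 10 * (A!10 + A!13)) - (24 * A!1 - 1 * (A!1 + A!22))) + (-28) * ((A!11 + A!12) - (A!2 + A!21)) + (-2) * ((24 * A!11 - 11 * (A!11 + A!12)) - (24 * A!2 - 2 * (A!2 + A!21))) + (30) * ((A!12 + A!11) - (A!0 + A!23)) + (-2) * ((24 * A!12 - 12 * (A!12 + A!11)) - (24 * A!0 - 0 * (A!0 + A!23))) + (6) * ((24 * A!13 - 13 * (A!13 + A!10)) - (24 * A!1 - 1 * (A!1 + A!22))) + (-18) * ((A!0 + A!23) + (A!1 + A!22) + (A!2 + A!21))"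
      by (simp add: algebra_simps)
    show ?thesis by (subst E) (rule dvd_add[OF dvd_add[OF dvd_add[OF dvd_add[OF dvd_add[OF dvd_add[OF dvd_add[OF dvd_add[OF dvd_add[OF dvd_mult[OF D5] dvd_mult[OF G5]] dvd_mult[OF D10]] dvd_mult[OF G10]] dvd_mult[OF D11]] dvd_mult[OF G11]] dvd_mult[OF D12]] dvd_mult[OF G12]] dvd_mult[OF G13]] dvd_mult[OF DS]])
  qed
  have X6: "int p dvd 48 * (A!6 - A!1 * (-10) - A!23 * (-1))"
  proof -
    have E: "48 * (A!6 - A!1 * (-10) - A!23 * (-1)) = (12) * ((A!6 + A!17) - (A!0 + A!23)) + (2) * ((24 * A!6 - 6 * (A!6 + A!17)) - (24 * A!0 - 0 * (A!0 + A!23))) + (10) * ((A!10 + A!13) - (A!1 + A!22)) + (-10) * ((24 * A!10 - 10 * (A!10 + A!13)) - (24 * A!1 - 1 * (A!1 + A!22))) + (30) * ((A!11 + A!12) - (A!2 + A!21)) + (-30) * ((A!12 + A!11) - (A!0 + A!23)) + (-10) * ((24 * A!13 - 13 * (A!13 + A!10)) - (24 * A!1 - 1 * (A!1 + A!22))) + (30) * ((A!0 + A!23) + (A!1 + A!22) + (A!2 + A!21))"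
      by (simp add: algebra_simps)
    show ?thesis by (subst E) (rule dvd_add[OF dvd_add[OF dvd_add[OF dvd_add[OF dvd_add[OF dvd_add[OF dvd_add[OF dvd_mult[OF D6] dvd_mult[OF G6]] dvd_mult[OF D10]] dvd_mult[OF G10]] dvd_mult[OF D11]] dvd_mult[OF D12]] dvd_mult[OF G13]] dvd_mult[OF DS]])
  qed
  have X7: "int p dvd 48 * (A!7 - A!1 * (5) - A!23 * (0))"
  proof -
    have E: "48 * (A!7 - A!1 * (5) - A!23 * (0)) = (14) * ((A!7 + A!16) - (A!1 + A!22)) + (2) * ((24 * A!7 - 7 * (A!7 + A!16)) - (24 * A!1 - 1 * (A!1 + A!22))) + (-4) * ((A!10 + A!13) - (A!1 + A!22)) + (4) * ((24 * A!10 - 10 * (A!10 + A!13)) - (24 * A!1 - 1 * (A!1 + A!22))) + (4) * ((24 * A!13 - 13 * (A!13 + A!10)) - (24 * A!1 - 1 * (A!1 + A!22)))"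
      by (simp add: algebra_simps)
    show ?thesis by (subst E) (rule dvd_add[OF dvd_add[OF dvd_add[OF dvd_add[OF dvd_mult[OF D7] dvd_mult[OF G7]] dvd_mult[OF D10]] dvd_mult[OF G10]] dvd_mult[OF G13]])
  qed
  have X8: "int p dvd 48 * (A!8 - A!1 * (5) - A!23 * (1))"
  proof -
    have E: "48 * (A!8 - A!1 * (5) - A!23 * (1)) = (16) * ((A!8 + A!15) - (A!2 + A!21)) + (2) * ((24 * A!8 - 8 * (A!8 + A!15)) - (24 * A!2 - 2 * (A!2 + A!21))) + (-5) * ((A!10 + A!13) - (A!1 + A!22)) + (5) * ((24 * A!10 - 10 * (A!10 + A!13)) - (24 * A!1 - 1 * (A!1 + A!22))) + (-31) * ((A!11 + A!12) - (A!2 + A!21)) + (-2) * ((24 * A!11 - 11 * (A!11 + A!12)) - (24 * A!2 - 2 * (A!2 + A!21))) + (33) * ((A!12 + A!11) - (A!0 + A!23)) + (-2) * ((24 * A!12 - 12 * (A!12 + A!11)) - (24 * A!0 - 0 * (A!0 + A!23))) + (5) * ((24 * A!13 - 13 * (A!13 + A!10)) - (24 * A!1 - 1 * (A!1 + A!22))) + (-15) * ((A!0 + A!23) + (A!1 + A!22) + (A!2 + A!21))"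
      by (simp add: algebra_simps)
    show ?thesis by (subst E) (rule dvd_add[OF dvd_add[OF dvd_add[OF dvd_add[OF dvd_add[OF dvd_add[OF dvd_add[OF dvd_add[OF dvd_add[OF dvd_mult[OF D8] dvd_mult[OF G8]] dvd_mult[OF D10]] dvd_mult[OF G10]] dvd_mult[OF D11]] dvd_mult[OF G11]] dvd_mult[OF D12]] dvd_mult[OF G12]] dvd_mult[OF G13]] dvd_mult[OF DS]])
  qed
  have X9: "int p dvd 48 * (A!9 - A!1 * (-11) - A!23 * (-1))"
  proof -
    have E: "48 * (A!9 - A!1 * (-11) - A!23 * (-1)) = (18) * ((A!9 + A!14) - (A!0 + A!23)) + (2) * ((24 * A!9 - 9 * (A!9 + A!14)) - (24 * A!0 - 0 * (A!0 + A!23))) + (11) * ((A!10 + A!13) - (A!1 + A!22)) + (-11) * ((24 * A!10 - 10 * (A!10 + A!13)) - (24 * A!1 - 1 * (A!1 + A!22))) + (33) * ((A!11 + A!12) - (A!2 + A!21)) + (-33) * ((A!12 + A!11) - (A!0 + A!23)) + (-11) * ((24 * A!13 - 13 * (A!13 + A!10)) - (24 * A!1 - 1 * (A!1 + A!22))) + (33) * ((A!0 + A!23) + (A!1 + A!22) + (A!2 + A!21))"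
      by (simp add: algebra_simps)
    show ?thesis by (subst E) (rule dvd_add[OF dvd_add[OF dvd_add[OF dvd_add[OF dvd_add[OF dvd_add[OF dvd_add[OF dvd_mult[OF D9] dvd_mult[OF G9]] dvd_mult[OF D10]] dvd_mult[OF G10]] dvd_mult[OF D11]] dvd_mult[OF D12]] dvd_mult[OF G13]] dvd_mult[OF DS]])
  qed
  have X10: "int p dvd 48 * (A!10 - A!1 * (7) - A!23 * (0))"
  proof -
    have E: "48 * (A!10 - A!1 * (7) - A!23 * (0)) = (14) * ((A!10 + A!13) - (A!1 + A!22)) + (8) * ((24 * A!10 - 10 * (A!10 + A!13)) - (24 * A!1 - 1 * (A!1 + A!22))) + (6) * ((24 * A!13 - 13 * (A!13 + A!10)) - (24 * A!1 - 1 * (A!1 + A!22)))"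
      by (simp add: algebra_simps)
    show ?thesis by (subst E) (rule dvd_add[OF dvd_add[OF dvd_mult[OF D10] dvd_mult[OF G10]] dvd_mult[OF G13]])
  qed
  have X11: "int p dvd 48 * (A!11 - A!1 * (4) - A!23 * (1))"
  proof -
    have E: "48 * (A!11 - A!1 * (4) - A!23 * (1)) = (-4) * ((A!10 + A!13) - (A!1 + A!22)) + (4) * ((24 * A!10 - 10 * (A!10 + A!13)) - (24 * A!1 - 1 * (A!1 + A!22))) + (-12) * ((A!11 + A!12) - (A!2 + A!21)) + (36) * ((A!12 + A!11) - (A!0 + A!23)) + (-2) * ((24 * A!12 - 12 * (A!12 + A!11)) - (24 * A!0 - 0 * (A!0 + A!23))) + (4) * ((24 * A!13 - 13 * (A!13 + A!10)) - (24 * A!1 - 1 * (A!1 + A!22))) + (-12) * ((A!0 + A!23) + (A!1 + A!22) + (A!2 + A!21))"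
      by (simp add: algebra_simps)
    show ?thesis by (subst E) (rule dvd_add[OF dvd_add[OF dvd_add[OF dvd_add[OF dvd_add[OF dvd_add[OF dvd_mult[OF D10] dvd_mult[OF G10]] dvd_mult[OF D11]] dvd_mult[OF D12]] dvd_mult[OF G12]] dvd_mult[OF G13]] dvd_mult[OF DS]])
  qed
  have X12: "int p dvd 48 * (A!12 - A!1 * (-12) - A!23 * (-1))"
  proof -
    have E: "48 * (A!12 - A!1 * (-12) - A!23 * (-1)) = (12) * ((A!10 + A!13) - (A!1 + A!22)) + (-12) * ((24 * A!10 - 10 * (A!10 + A!13)) - (24 * A!1 - 1 * (A!1 + A!22))) + (36) * ((A!11 + A!12) - (A!2 + A!21)) + (-12) * ((A!12 + A!11) - (A!0 + A!23)) + (2) * ((24 * A!12 - 12 * (A!12 + A!11)) - (24 * A!0 - 0 * (A!0 + A!23))) + (-12) * ((24 * A!13 - 13 * (A!13 + A!10)) - (24 * A!1 - 1 * (A!1 + A!22))) + (36) * ((A!0 + A!23) + (A!1 + A!22) + (A!2 + A!21))"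
      by (simp add: algebra_simps)
    show ?thesis by (subst E) (rule dvd_add[OF dvd_add[OF dvd_add[OF dvd_add[OF dvd_add[OF dvd_add[OF dvd_mult[OF D10] dvd_mult[OF G10]] dvd_mult[OF D11]] dvd_mult[OF D12]] dvd_mult[OF G12]] dvd_mult[OF G13]] dvd_mult[OF DS]])
  qed
  have X13: "int p dvd 48 * (A!13 - A!1 * (9) - A!23 * (0))"
  proof -
    have E: "48 * (A!13 - A!1 * (9) - A!23 * (0)) = (18) * ((A!10 + A!13) - (A!1 + A!22)) + (8) * ((24 * A!10 - 10 * (A!10 + A!13)) - (24 * A!1 - 1 * (A!1 + A!22))) + (10) * ((24 * A!13 - 13 * (A!13 + A!10)) - (24 * A!1 - 1 * (A!1 + A!22)))"
      by (simp add: algebra_simps)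
    show ?thesis by (subst E) (rule dvd_add[OF dvd_add[OF dvd_mult[OF D10] dvd_mult[OF G10]] dvd_mult[OF G13]])
  qed
  have X14: "int p dvd 48 * (A!14 - A!1 * (3) - A!23 * (1))"
  proof -
    have E: "48 * (A!14 - A!1 * (3) - A!23 * (1)) = (30) * ((A!9 + A!14) - (A!0 + A!23)) + (-2) * ((24 * A!9 - 9 * (A!9 + A!14)) - (24 * A!0 - 0 * (A!0 + A!23))) + (-3) * ((A!10 + A!13) - (A!1 + A!22)) + (3) * ((24 * A!10 - 10 * (A!10 + A!13)) - (24 * A!1 - 1 * (A!1 + A!22))) + (-9) * ((A!11 + A!12) - (A!2 + A!21)) + (9) * ((A!12 + A!11) - (A!0 + A!23)) + (3) * ((24 * A!13 - 13 * (A!13 + A!10)) - (24 * A!1 - 1 * (A!1 + A!22))) + (-9) * ((A!0 + A!23) + (A!1 + A!22) + (A!2 + A!21))"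
      by (simp add: algebra_simps)
    show ?thesis by (subst E) (rule dvd_add[OF dvd_add[OF dvd_add[OF dvd_add[OF dvd_add[OF dvd_add[OF dvd_add[OF dvd_mult[OF D9] dvd_mult[OF G9]] dvd_mult[OF D10]] dvd_mult[OF G10]] dvd_mult[OF D11]] dvd_mult[OF D12]] dvd_mult[OF G13]] dvd_mult[OF DS]])
  qed
  have X15: "int p dvd 48 * (A!15 - A!1 * (-13) - A!23 * (-1))"
  proof -
    have E: "48 * (A!15 - A!1 * (-13) - A!23 * (-1)) = (32) * ((A!8 + A!15) - (A!2 + A!21)) + (-2) * ((24 * A!8 - 8 * (A!8 + A!15)) - (24 * A!2 - 2 * (A!2 + A!21))) + (13) * ((A!10 + A!13) - (A!1 + A!22)) + (-13) * ((24 * A!10 - 10 * (A!10 + A!13)) - (24 * A!1 - 1 * (A!1 + A!22))) + (7) * ((A!11 + A!12) - (A!2 + A!21)) + (2) * ((24 * A!11 - 11 * (A!11 + A!12)) - (24 * A!2 - 2 * (A!2 + A!21))) + (-9) * ((A!12 + A!11) - (A!0 + A!23)) + (2) * ((24 * A!12 - 12 * (A!12 + A!11)) - (24 * A!0 - 0 * (A!0 + A!23))) + (-13) * ((24 * A!13 - 13 * (A!13 + A!10)) - (24 * A!1 - 1 * (A!1 + A!22))) + (39) * ((A!0 + A!23) + (A!1 + A!22) + (A!2 + A!21))"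
      by (simp add: algebra_simps)
    show ?thesis by (subst E) (rule dvd_add[OF dvd_add[OF dvd_add[OF dvd_add[OF dvd_add[OF dvd_add[OF dvd_add[OF dvd_add[OF dvd_add[OF dvd_mult[OF D8] dvd_mult[OF G8]] dvd_mult[OF D10]] dvd_mult[OF G10]] dvd_mult[OF D11]] dvd_mult[OF G11]] dvd_mult[OF D12]] dvd_mult[OF G12]] dvd_mult[OF G13]] dvd_mult[OF DS]])
  qed
  have X16: "int p dvd 48 * (A!16 - A!1 * (11) - A!23 * (0))"
  proof -
    have E: "48 * (A!16 - A!1 * (11) - A!23 * (0)) = (34) * ((A!7 + A!16) - (A!1 + A!22)) + (-2) * ((24 * A!7 - 7 * (A!7 + A!16)) - (24 * A!1 - 1 * (A!1 + A!22))) + (-12) * ((A!10 + A!13) - (A!1 + A!22)) + (12) * ((24 * A!10 - 10 * (A!10 + A!13)) - (24 * A!1 - 1 * (A!1 + A!22))) + (12) * ((24 * A!13 - 13 * (A!13 + A!10)) - (24 * A!1 - 1 * (A!1 + A!22)))"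
      by (simp add: algebra_simps)
    show ?thesis by (subst E) (rule dvd_add[OF dvd_add[OF dvd_add[OF dvd_add[OF dvd_mult[OF D7] dvd_mult[OF G7]] dvd_mult[OF D10]] dvd_mult[OF G10]] dvd_mult[OF G13]])
  qed
  have X17: "int p dvd 48 * (A!17 - A!1 * (2) - A!23 * (1))"
  proof -
    have E: "48 * (A!17 - A!1 * (2) - A!23 * (1)) = (36) * ((A!6 + A!17) - (A!0 + A!23)) + (-2) * ((24 * A!6 - 6 * (A!6 + A!17)) - (24 * A!0 - 0 * (A!0 + A!23))) + (-2) * ((A!10 + A!13) - (A!1 + A!22)) + (2) * ((24 * A!10 - 10 * (A!10 + A!13)) - (24 * A!1 - 1 * (A!1 + A!22))) + (-6) * ((A!11 + A!12) - (A!2 + A!21)) + (6) * ((A!12 + A!11) - (A!0 + A!23)) + (2) * ((24 * A!13 - 13 * (A!13 + A!10)) - (24 * A!1 - 1 * (A!1 + A!22))) + (-6) * ((A!0 + A!23) + (A!1 + A!22) + (A!2 + A!21))"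
      by (simp add: algebra_simps)
    show ?thesis by (subst E) (rule dvd_add[OF dvd_add[OF dvd_add[OF dvd_add[OF dvd_add[OF dvd_add[OF dvd_add[OF dvd_mult[OF D6] dvd_mult[OF G6]] dvd_mult[OF D10]] dvd_mult[OF G10]] dvd_mult[OF D11]] dvd_mult[OF D12]] dvd_mult[OF G13]] dvd_mult[OF DS]])
  qed
  have X18: "int p dvd 48 * (A!18 - A!1 * (-14) - A!23 * (-1))"
  proof -
    have E: "48 * (A!18 - A!1 * (-14) - A!23 * (-1)) = (38) * ((A!5 + A!18) - (A!2 + A!21)) + (-2) * ((24 * A!5 - 5 * (A!5 + A!18)) - (24 * A!2 - 2 * (A!2 + A!21))) + (14) * ((A!10 + A!13) - (A!1 + A!22)) + (-14) * ((24 * A!10 - 10 * (A!10 + A!13)) - (24 * A!1 - 1 * (A!1 + A!22))) + (4) * ((A!11 + A!12) - (A!2 + A!21)) + (2) * ((24 * A!11 - 11 * (A!11 + A!12)) - (24 * A!2 - 2 * (A!2 + A!21))) + (-6) * ((A!12 + A!11) - (A!0 + A!23)) + (2) * ((24 * A!12 - 12 * (A!12 + A!11)) - (24 * A!0 - 0 * (A!0 + A!23))) + (-14) * ((24 * A!13 - 13 * (A!13 + A!10)) - (24 * A!1 - 1 * (A!1 + A!22))) + (42) * ((A!0 + A!23) + (A!1 + A!22) + (A!2 + A!21))"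
      by (simp add: algebra_simps)
    show ?thesis by (subst E) (rule dvd_add[OF dvd_add[OF dvd_add[OF dvd_add[OF dvd_add[OF dvd_add[OF dvd_add[OF dvd_add[OF dvd_add[OF dvd_mult[OF D5] dvd_mult[OF G5]] dvd_mult[OF D10]] dvd_mult[OF G10]] dvd_mult[OF D11]] dvd_mult[OF G11]] dvd_mult[OF D12]] dvd_mult[OF G12]] dvd_mult[OF G13]] dvd_mult[OF DS]])
  qed
  have X19: "int p dvd 48 * (A!19 - A!1 * (13) - A!23 * (0))"
  proof -
    have E: "48 * (A!19 - A!1 * (13) - A!23 * (0)) = (40) * ((A!4 + A!19) - (A!1 + A!22)) + (-2) * ((24 * A!4 - 4 * (A!4 + A!19)) - (24 * A!1 - 1 * (A!1 + A!22))) + (-14) * ((A!10 + A!13) - (A!1 + A!22)) + (14) * ((24 * A!10 - 10 * (A!10 + A!13)) - (24 * A!1 - 1 * (A!1 + A!22))) + (14) * ((24 * A!13 - 13 * (A!13 + A!10)) - (24 * A!1 - 1 * (A!1 + A!22)))"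
      by (simp add: algebra_simps)
    show ?thesis by (subst E) (rule dvd_add[OF dvd_add[OF dvd_add[OF dvd_add[OF dvd_mult[OF D4] dvd_mult[OF G4]] dvd_mult[OF D10]] dvd_mult[OF G10]] dvd_mult[OF G13]])
  qed
  have X20: "int p dvd 48 * (A!20 - A!1 * (1) - A!23 * (1))"
  proof -
    have E: "48 * (A!20 - A!1 * (1) - A!23 * (1)) = (42) * ((A!3 + A!20) - (A!0 + A!23)) + (-2) * ((24 * A!3 - 3 * (A!3 + A!20)) - (24 * A!0 - 0 * (A!0 + A!23))) + (-1) * ((A!10 + A!13) - (A!1 + A!22)) + (1) * ((24 * A!10 - 10 * (A!10 + A!13)) - (24 * A!1 - 1 * (A!1 + A!22))) + (-3) * ((A!11 + A!12) - (A!2 + A!21)) + (3) * ((A!12 + A!11) - (A!0 + A!23)) + (1) * ((24 * A!13 - 13 * (A!13 + A!10)) - (24 * A!1 - 1 * (A!1 + A!22))) + (-3) * ((A!0 + A!23) + (A!1 + A!22) + (A!2 + A!21))"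
      by (simp add: algebra_simps)
    show ?thesis by (subst E) (rule dvd_add[OF dvd_add[OF dvd_add[OF dvd_add[OF dvd_add[OF dvd_add[OF dvd_add[OF dvd_mult[OF D3] dvd_mult[OF G3]] dvd_mult[OF D10]] dvd_mult[OF G10]] dvd_mult[OF D11]] dvd_mult[OF D12]] dvd_mult[OF G13]] dvd_mult[OF DS]])
  qed
  have X21: "int p dvd 48 * (A!21 - A!1 * (-15) - A!23 * (-1))"
  proof -
    have E: "48 * (A!21 - A!1 * (-15) - A!23 * (-1)) = (15) * ((A!10 + A!13) - (A!1 + A!22)) + (-15) * ((24 * A!10 - 10 * (A!10 + A!13)) - (24 * A!1 - 1 * (A!1 + A!22))) + (1) * ((A!11 + A!12) - (A!2 + A!21)) + (2) * ((24 * A!11 - 11 * (A!11 + A!12)) - (24 * A!2 - 2 * (A!2 + A!21))) + (-3) * ((A!12 + A!11) - (A!0 + A!23)) + (2) * ((24 * A!12 - 12 * (A!12 + A!11)) - (24 * A!0 - 0 * (A!0 + A!23))) + (-15) * ((24 * A!13 - 13 * (A!13 + A!10)) - (24 * A!1 - 1 * (A!1 + A!22))) + (45) * ((A!0 + A!23) + (A!1 + A!22) + (A!2 + A!21))"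
      by (simp add: algebra_simps)
    show ?thesis by (subst E) (rule dvd_add[OF dvd_add[OF dvd_add[OF dvd_add[OF dvd_add[OF dvd_add[OF dvd_add[OF dvd_mult[OF D10] dvd_mult[OF G10]] dvd_mult[OF D11]] dvd_mult[OF G11]] dvd_mult[OF D12]] dvd_mult[OF G12]] dvd_mult[OF G13]] dvd_mult[OF DS]])
  qed
  have X22: "int p dvd 48 * (A!22 - A!1 * (15) - A!23 * (0))"
  proof -
    have E: "48 * (A!22 - A!1 * (15) - A!23 * (0)) = (-16) * ((A!10 + A!13) - (A!1 + A!22)) + (16) * ((24 * A!10 - 10 * (A!10 + A!13)) - (24 * A!1 - 1 * (A!1 + A!22))) + (16) * ((24 * A!13 - 13 * (A!13 + A!10)) - (24 * A!1 - 1 * (A!1 + A!22)))"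
      by (simp add: algebra_simps)
    show ?thesis by (subst E) (rule dvd_add[OF dvd_add[OF dvd_mult[OF D10] dvd_mult[OF G10]] dvd_mult[OF G13]])
  qed
  show ?thesis unfolding list_all_iff using X0 X2 X3 X4 X5 X6 X7 X8 X9 X10 X11 X12 X13 X14 X15 X16 X17 X18 X19 X20 X21 X22 by (simp add: atLeast0LessThan lessThan_nat_numeral lessThan_Suc vv_def ww_def)
qed

definition nextrow :: "nat \<Rightarrow> int list \<Rightarrow> int list" where
  "nextrow m r = map (\<lambda>(x,y). (-x-y) mod int m) (zip r (tl r))"
fun tri_rows :: "nat \<Rightarrow> int list \<Rightarrow> nat \<Rightarrow> int list list" where
  "tri_rows m r 0 = []"
| "tri_rows m r (Suc n) = r # tri_rows m (nextrow m r) n"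
definition tcount :: "nat \<Rightarrow> int list \<Rightarrow> int \<Rightarrow> nat" where
  "tcount m xs x = length (filter (\<lambda>y. y = x) (concat (tri_rows m (map (\<lambda>y. y mod int m) xs) (length xs))))"

lemma nextrow_len[simp]: "length (nextrow m r) = length r - 1"
  by (simp add: nextrow_def)
lemma nextrow_nth: "j + 1 < length r \<Longrightarrow> nextrow m r ! j = (- r!j - r!(j+1)) mod int m"
  by (simp add: nextrow_def nth_tl)

lemma pow_row_len[simp]: "length ((nextrow m ^^ i) r) = length r - i"
  by (induction i) auto

lemma pow_row: "i + j < length xs \<Longrightarrow> ((nextrow m ^^ i) (map (\<lambda>y. y mod int m) xs)) ! j = nabla m xs i j"
proof (induction i arbitrary: j)
  case 0 then show ?case by simp
next
  case (Suc i)
  have IH1: "((nextrow m ^^ i) (map (\<lambda>y. y mod int m) xs)) ! j = nabla m xs i j"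
    using Suc by simp
  have IH2: "((nextrow m ^^ i) (map (\<lambda>y. y mod int m) xs)) ! (j+1) = nabla m xs i (j+1)"
    using Suc.IH[of "j+1"] Suc.prems by simp
  show ?case using Suc.prems IH1 IH2 by (simp add: nextrow_nth)
qed

lemma tri_rows_len[simp]: "length (tri_rows m r n) = n"
  by (induction n arbitrary: r) auto

lemma tri_rows_nth: "i < n \<Longrightarrow> tri_rows m r n ! i = (nextrow m ^^ i) r"
proof (induction n arbitrary: r i)
  case 0 then show ?case by simp
next
  case (Suc n)
  show ?case
  proof (cases i)
    case 0 then show ?thesis by simp
  next
    case (Suc k)
    then show ?thesis using Suc.IH[of k "nextrow m r"] Suc.prems by (simp add: funpow_swap1)
  qed
qed

lemma tri_count_eq: "tri_count m xs x = tcount m xs x"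
proof -
  define n where "n = length xs"
  define r0 where "r0 = map (\<lambda>y. y mod int m) xs"
  define R where "R = tri_rows m r0 n"
  have "{(i, j). i + j < length xs \<and> nabla m xs i j = x} =
        (SIGMA i:{..<n}. {j. j < length (R!i) \<and> (R!i) ! j = x})"
    by (auto simp: n_def R_def r0_def tri_rows_nth pow_row)
  then have "tri_count m xs x = (\<Sum>i<n. card {j. j < length (R!i) \<and> (R!i) ! j = x})"
    by (simp add: tri_count_def card_SigmaI)
  also have "\<dots> = (\<Sum>i<n. length (filter (\<lambda>y. y = x) (R!i)))"
    by (simp add: length_filter_conv_card)
  also have "\<dots> = sum_list (map (\<lambda>r. length (filter (\<lambda>y. y = x) r)) R)"
    by (simp add: sum_list_sum_nth R_def atLeast0LessThan)
  also have "\<dots> = length (filter (\<lambda>y. y = x) (concat R))"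
    by (induction R) auto
  finally show ?thesis by (simp add: tcount_def R_def r0_def n_def)
qed

definition LL :: "int \<Rightarrow> int \<Rightarrow> int list" where
  "LL a b = map (\<lambda>k. (a * vv!k + b * ww!k) mod 2) [0..<24]"

lemma tc00: "tcount 2 (prefix_seq (IAP 2 (LL 0 0) (times_X24 2 (LL 0 0))) 48) 0 \<noteq> tcount 2 (prefix_seq (IAP 2 (LL 0 0) (times_X24 2 (LL 0 0))) 48) 1"
  by code_simp
lemma tc01: "tcount 2 (prefix_seq (IAP 2 (LL 0 1) (times_X24 2 (LL 0 1))) 48) 0 \<noteq> tcount 2 (prefix_seq (IAP 2 (LL 0 1) (times_X24 2 (LL 0 1))) 48) 1"
  by code_simp
lemma tc10: "tcount 2 (prefix_seq (IAP 2 (LL 1 0) (times_X24 2 (LL 1 0))) 48) 0 \<noteq> tcount 2 (prefix_seq (IAP 2 (LL 1 0) (times_X24 2 (LL 1 0))) 48) 1"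
  by code_simp
lemma tc11: "tcount 2 (prefix_seq (IAP 2 (LL 1 1) (times_X24 2 (LL 1 1))) 48) 0 \<noteq> tcount 2 (prefix_seq (IAP 2 (LL 1 1) (times_X24 2 (LL 1 1))) 48) 1"
  by code_simp

lemma not_bal_of_tc:
  assumes "tcount 2 xs 0 \<noteq> tcount 2 xs 1"
  shows "\<not> balanced 2 xs"
  using assms unfolding balanced_def tri_count_eq by force

lemma m2_fail:
  assumes "a \<in> {0, 1}" "b \<in> {0, 1}"
  shows "\<not> balanced 2 (prefix_seq (IAP 2 (LL a b) (times_X24 2 (LL a b))) 48)"
  using assms not_bal_of_tc[OF tc00] not_bal_of_tc[OF tc01] not_bal_of_tc[OF tc10] not_bal_of_tc[OF tc11]
  by auto

lemma pi2:
  assumes "A = map (\<lambda>k. x * vv!k + y * ww!k) [0..<24]"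
  shows "pi_m 2 A = LL (x mod 2) (y mod 2)"
proof -
  have "(x * vv!k + y * ww!k) mod 2 = (x mod 2 * vv!k + y mod 2 * ww!k) mod 2" for k
    by (intro mod_add_cong mod_mult_cong) simp_all
  then show ?thesis unfolding assms pi_m_def LL_def by simp
qed

lemma mod2_cases: "(x::int) mod 2 \<in> {0, 1}"
  by auto

theorem corollary6:
  shows "\<not> (\<exists>A :: int list. length A = 24 \<and>
           (\<forall>m :: nat. m > 0 \<longrightarrow>
              (let S = IAP m (pi_m m A) (times_X24 m (pi_m m A)) in
                 periodic_orbit m S (24 * m) (24 * m) \<and>
                 (\<forall>l :: nat. balanced m (prefix_seq S (24 * l * m))))))"
proof
  assume "\<exists>A :: int list. length A = 24 \<and>
           (\<forall>m :: nat. m > 0 \<longrightarrow>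
              (let S = IAP m (pi_m m A) (times_X24 m (pi_m m A)) in
                 periodic_orbit m S (24 * m) (24 * m) \<and>
                 (\<forall>l :: nat. balanced m (prefix_seq S (24 * l * m)))))"
  then obtain A :: "int list" where A: "length A = 24"
    and H0: "\<forall>m :: nat. m > 0 \<longrightarrow>
              (let S = IAP m (pi_m m A) (times_X24 m (pi_m m A)) in
                 periodic_orbit m S (24 * m) (24 * m) \<and>
                 (\<forall>l :: nat. balanced m (prefix_seq S (24 * l * m))))"
    by blast
  have H: "periodic_orbit m (IAP m (pi_m m A) (times_X24 m (pi_m m A))) (24 * m) (24 * m) \<and>
                 (\<forall>l :: nat. balanced m (prefix_seq (IAP m (pi_m m A) (times_X24 m (pi_m m A))) (24 * l * m)))"
    if "m > 0" for m
    using H0 that unfolding Let_def by blast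
  define X where "X = (\<lambda>k. A!k - A!1 * vv!k - A!23 * ww!k)"
  define B where "B = nat cB + 48 + (\<Sum>k<24. nat \<bar>X k\<bar>)"
  obtain p where p: "prime p" "p > B" using bigger_prime by blast
  have pc: "int p > cB" using p(2) unfolding B_def using cB_pos by linarith
  have p48: "p > 48" using p(2) unfolding B_def by simp
  have per: "periodic_orbit p (IAP p (pi_m p A) (times_X24 p (pi_m p A))) (24 * p) (24 * p)"
    using H[of p] p48 by simp
  have LA: "list_all (\<lambda>k. int p dvd 48 * (A!k - A!1 * vv!k - A!23 * ww!k)) [0..<24]"
    by (rule lin_final[OF p(1) pc A per])
  have X0: "X k = 0" if k: "k < 24" for k
  proof -
    have "int p dvd 48 * X k" using LA k unfolding list_all_iff X_def by auto
    moreover have "\<not> int p dvd 48"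
    proof
      assume "int p dvd 48"
      then have "int p \<le> 48" by (rule zdvd_imp_le) simp
      then show False using p48 by simp
    qed
    moreover have "prime (int p)" using p by simp
    ultimately have d: "int p dvd X k" by (simp add: prime_dvd_mult_iff)
    have "nat \<bar>X k\<bar> \<le> (\<Sum>k<24. nat \<bar>X k\<bar>)"
      by (rule member_le_sum) (use k in auto)
    then have lt: "\<bar>X k\<bar> < int p" using p(2) unfolding B_def by linarith
    show ?thesis
    proof (rule ccontr)
      assume "X k \<noteq> 0"
      then have "\<bar>int p\<bar> \<le> \<bar>X k\<bar>" using d by (rule dvd_imp_le_int)
      then show False using lt by simp
    qed
  qed
  have Aeq: "A = map (\<lambda>k. A!1 * vv!k + A!23 * ww!k) [0..<24]"
  proof (rule nth_equalityI)
    show "length A = length (map (\<lambda>k. A!1 * vv!k + A!23 * ww!k) [0..<24])" using A by simp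
  next
    fix k assume "k < length A"
    then have k: "k < 24" using A by simp
    then show "A ! k = map (\<lambda>k. A!1 * vv!k + A!23 * ww!k) [0..<24] ! k"
      using X0[OF k] unfolding X_def by simp
  qed
  have bal: "balanced 2 (prefix_seq (IAP 2 (pi_m 2 A) (times_X24 2 (pi_m 2 A))) 48)"
  proof -
    have "balanced 2 (prefix_seq (IAP 2 (pi_m 2 A) (times_X24 2 (pi_m 2 A))) (24 * 1 * 2))"
    proof -
      have two: "(0::nat) < 2" by simp
      show ?thesis using H[OF two] by blast
    qed
    then show ?thesis by simp
  qed
  have "pi_m 2 A = LL (A!1 mod 2) (A!23 mod 2)" by (rule pi2[OF Aeq])
  then show False using bal m2_fail[OF mod2_cases mod2_cases] by simp
qed

end
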